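(* Let $F:\mathbb{Z}\to\mathbb{C}$ be any function and $n\in\mathbb{Z}$. For $m=1,2,3,\dots$ define $$J_m(n,F):=\sum_{i\in\mathbb{Z}}F(i)F(i+n)F(i+2n)\cdots F\big(i+n(m-1)\big)\,:\psi_i\psi^\dagger_{i+nm}:.$$ Then $[J_m(n,F),J_{m'}(n,F)]=0$ for all $m,m'\ge1$.
   Context: Let $\psi_i,\psi^\dagger_i$ ($i\in\mathbb{Z}$) be charged free fermions, i.e. operators on the fermionic Fock space $\mathcal{F}$ satisfying $[\psi_i,\psi_j]_+=[\psi^\dagger_i,\psi^\dagger_j]_+=0$ and $[\psi_i,\psi^\dagger_j]_+=\delta_{ij}$. The space $\mathcal{F}$ is spanned by the vectors obtained from the vacuum $|0\rangle$ by applying finitely many $\psi_i,\psi^\dagger_i$; the vacuum satisfies $\psi^\dagger_i|0\rangle=0$ and $\psi_{-i-1}|0\rangle=0$ for $i\ge0$, and the dual vacuum satisfies $\langle0|\psi_i=0$, $\langle0|\psi^\dagger_{-i-1}=0$ for $i\ge0$, $\langle0|0\rangle=1$. Normal ordering: $:\psi_i\psi^\dagger_j:=\psi_i\psi^\dagger_j-\langle0|\psi_i\psi^\dagger_j|0\rangle$. The infinite sums act on each vector of $\mathcal F$ through finitely many nonzero terms. *)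

theory Defs
  imports Complex_Main
begin

text \<open>Concrete fermionic Fock space (semi-infinite wedge / Maya diagram model).
A basis vector is labelled by a Maya diagram S (the set of occupied modes), which
differs from the vacuum diagram {..<0} in finitely many places. The operator
psi j occupies mode j, psid j empties mode j (both with the usual sign).\<close>

type_synonym fvec = "int set \<Rightarrow> complex"

definition maya :: "int set \<Rightarrow> bool" where
  "maya S \<longleftrightarrow> finite (S - {..<0}) \<and> finite ({..<0} - S)"

definition fock :: "fvec set" where
  "fock = {v. finite {S. v S \<noteq> 0} \<and> (\<forall>S. v S \<noteq> 0 \<longrightarrow> maya S)}"

definition fsign :: "int set \<Rightarrow> int \<Rightarrow> complex" where
  "fsign S j = (-1) ^ card {k \<in> S. j < k}"

text \<open>psi j |S> = fsign S j |S \<union> {j}> if j \<notin> S, else 0.\<close>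
definition psi :: "int \<Rightarrow> fvec \<Rightarrow> fvec" where
  "psi j v = (\<lambda>T. if j \<in> T then fsign (T - {j}) j * v (T - {j}) else 0)"

text \<open>psid j |S> = fsign S j |S - {j}> if j \<in> S, else 0.\<close>
definition psid :: "int \<Rightarrow> fvec \<Rightarrow> fvec" where
  "psid j v = (\<lambda>T. if j \<notin> T then fsign T j * v (insert j T) else 0)"

definition vac :: fvec where
  "vac = (\<lambda>T. if T = {..<0} then 1 else 0)"

text \<open>Vacuum expectation value <0|X|0>: the dual vacuum extracts the vacuum coefficient.\<close>
definition vev :: "(fvec \<Rightarrow> fvec) \<Rightarrow> complex" where
  "vev X = X vac {..<0}"

definition nord :: "int \<Rightarrow> int \<Rightarrow> fvec \<Rightarrow> fvec" where
  "nord i j v = (\<lambda>T. psi i (psid j v) T - vev (\<lambda>w. psi i (psid j w)) * v T)"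

text \<open>J_m(n,F) = sum_i F(i)F(i+n)...F(i+n(m-1)) :psi_i psid_{i+nm}:, the infinite sum
acting on a vector through its finitely many nonzero terms.\<close>
definition Jop :: "nat \<Rightarrow> int \<Rightarrow> (int \<Rightarrow> complex) \<Rightarrow> fvec \<Rightarrow> fvec" where
  "Jop m n F v = (\<lambda>T. \<Sum>i \<in> {i. nord i (i + n * int m) v \<noteq> (\<lambda>_. 0)}.
      (\<Prod>k<m. F (i + n * int k)) * nord i (i + n * int m) v T)"

end

theory Submission
  imports Defs
begin


definition good :: "fvec \<Rightarrow> bool" where "good v \<longleftrightarrow> (\<forall>S. v S \<noteq> 0 \<longrightarrow> maya S)"
definition fin :: "fvec \<Rightarrow> bool" where "fin v \<longleftrightarrow> finite {S. v S \<noteq> 0}"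

lemma maya_insert_iff[simp]: "maya (insert i S) = maya S"
proof
  assume "maya (insert i S)"
  then have a: "finite (insert i S - {..<0})" "finite ({..<0} - insert i S)" by (auto simp: maya_def)
  have "S - {..<0} \<subseteq> insert i S - {..<0}" by auto
  moreover have "{..<0} - S \<subseteq> insert i ({..<0} - insert i S)" by auto
  ultimately show "maya S" using a unfolding maya_def by (meson finite_insert finite_subset)
next
  assume "maya S"
  then have a: "finite (S - {..<0})" "finite ({..<0} - S)" by (auto simp: maya_def)
  have "insert i S - {..<0} \<subseteq> insert i (S - {..<0})" by auto
  moreover have "{..<0} - insert i S \<subseteq> {..<0} - S" by auto
  ultimately show "maya (insert i S)" using a unfolding maya_def by (meson finite_insert finite_subset)
qed

lemma maya_remove_iff[simp]: "maya (S - {i}) = maya S"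
proof (cases "i \<in> S")
  case True
  then have "S = insert i (S - {i})" by auto
  then have "maya S = maya (insert i (S - {i}))" by simp
  then show ?thesis by (simp only: maya_insert_iff)
next
  case False then show ?thesis by simp
qed

lemma maya_fin_above: "maya S \<Longrightarrow> finite {k\<in>S. j<k}"
proof -
  assume "maya S"
  then have "finite ((S - {..<0}) \<union> {j<..<0})" by (auto simp: maya_def)
  moreover have "{k\<in>S. j<k} \<subseteq> (S - {..<0}) \<union> {j<..<0}" by auto
  ultimately show ?thesis by (rule finite_subset[rotated])
qed

lemma fsign_remove_self[simp]: "fsign (S - {i}) i = fsign S i"
proof -
  have "{k \<in> S - {i}. i < k} = {k\<in>S. i<k}" by auto
  then show ?thesis by (simp add: fsign_def)
qed

lemma fsign_insert_self[simp]: "fsign (insert i S) i = fsign S i"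
proof -
  have "{k \<in> insert i S. i < k} = {k\<in>S. i<k}" by auto
  then show ?thesis by (simp add: fsign_def)
qed

definition sg :: "int \<Rightarrow> int \<Rightarrow> complex" where "sg i j = (if i < j then -1 else 1)"

lemma fsign_insert: "maya S \<Longrightarrow> j \<notin> S \<Longrightarrow> fsign (insert j S) i = sg i j * fsign S i"
proof (cases "i < j")
  case True
  assume m: "maya S" and j: "j \<notin> S"
  have "{k \<in> insert j S. i < k} = insert j {k\<in>S. i<k}" using True by auto
  moreover have "j \<notin> {k\<in>S. i<k}" using j by auto
  ultimately show ?thesis using True maya_fin_above[OF m, of i] by (simp add: fsign_def sg_def)
next
  case False
  then have "{k \<in> insert j S. i < k} = {k\<in>S. i<k}" by auto
  then show ?thesis using False by (simp add: fsign_def sg_def)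
qed

lemma sg_sq: "sg i j * sg i j = 1" by (simp add: sg_def)
lemma fsign_sq: "fsign S i * fsign S i = 1"
  by (simp add: fsign_def flip: power_add)

lemma fsign_remove: "maya S \<Longrightarrow> j \<in> S \<Longrightarrow> fsign (S - {j}) i = sg i j * fsign S i"
proof -
  assume m: "maya S" and j: "j \<in> S"
  have "fsign S i = fsign (insert j (S - {j})) i" using j by (simp add: insert_absorb)
  also have "\<dots> = sg i j * fsign (S - {j}) i" using m by (intro fsign_insert) auto
  finally have "sg i j * fsign S i = sg i j * sg i j * fsign (S - {j}) i" by simp
  then show ?thesis by (simp add: sg_sq)
qed

lemma sg_anti: "i \<noteq> j \<Longrightarrow> sg i j = - sg j i" by (auto simp: sg_def)




lemma good_psi: "good v \<Longrightarrow> good (psi i v)"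
  unfolding good_def
proof (intro allI impI)
  fix S assume g: "\<forall>S. v S \<noteq> 0 \<longrightarrow> maya S" and "psi i v S \<noteq> 0"
  then have "v (S - {i}) \<noteq> 0" by (auto simp: psi_def split: if_splits)
  then have "maya (S - {i})" using g by blast
  then show "maya S" by simp
qed
lemma good_psid: "good v \<Longrightarrow> good (psid i v)"
  unfolding good_def
proof (intro allI impI)
  fix S assume g: "\<forall>S. v S \<noteq> 0 \<longrightarrow> maya S" and "psid i v S \<noteq> 0"
  then have "v (insert i S) \<noteq> 0" by (auto simp: psid_def split: if_splits)
  then have "maya (insert i S)" using g by blast
  then show "maya S" by simp
qed

lemma AC1: assumes g: "good v"
  shows "psi i (psid j v) T + psid j (psi i v) T = (if i = j then v T else 0)"
proof (cases "i = j")
  case True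
  show ?thesis
  proof (cases "i \<in> T")
    case True
    then have "insert i (T - {i}) = T" by auto
    then show ?thesis using True \<open>i = j\<close> by (simp add: psi_def psid_def fsign_sq mult.assoc[symmetric])
  next
    case False
    then have "insert i T - {i} = T" by auto
    then show ?thesis using False \<open>i = j\<close> by (simp add: psi_def psid_def fsign_sq mult.assoc[symmetric])
  qed
next
  case ne: False
  show ?thesis
  proof (cases "i \<in> T \<and> j \<notin> T")
    case False
    then show ?thesis using ne by (auto simp: psi_def psid_def)
  next
    case c: True
    have e: "insert j (T - {i}) = insert j T - {i}" using ne by auto
    show ?thesis
    proof (cases "v (insert j T - {i}) = 0")
      case True then show ?thesis using e c ne by (simp add: psi_def psid_def)
    next
      case False
      then have "maya (insert j T - {i})" using g unfolding good_def by blast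
      then have "maya T" by simp
      then have s1: "fsign (T - {i}) j = sg j i * fsign T j" and s2: "fsign (insert j T) i = sg i j * fsign T i"
        using c by (simp_all add: fsign_remove fsign_insert)
      have s3: "fsign (insert j T - {i}) i = fsign (insert j T) i" by simp
      show ?thesis using c ne e s1 s2 sg_anti[OF ne]
        by (simp add: psi_def psid_def s3 del: fsign_remove_self) (simp add: algebra_simps)
    qed
  qed
qed

lemma AC2: assumes g: "good v"
  shows "psi i (psi k v) T = - psi k (psi i v) T"
proof (cases "i \<noteq> k \<and> i \<in> T \<and> k \<in> T")
  case False then show ?thesis by (auto simp: psi_def)
next
  case c: True
  have e: "T - {i} - {k} = T - {k} - {i}" by auto
  show ?thesis
  proof (cases "v (T - {i} - {k}) = 0")
    case True then show ?thesis using e c by (simp add: psi_def)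
  next
    case False
    then have "maya (T - {i} - {k})" using g unfolding good_def by blast
    then have m: "maya T" by simp
    have s1: "fsign (T - {i} - {k}) k = sg k i * fsign T k" using m c
      by (simp add: fsign_remove)
    have s2: "fsign (T - {k} - {i}) i = sg i k * fsign T i" using m c
      by (simp add: fsign_remove)
    have ne: "i \<noteq> k" using c by simp
    show ?thesis using c e s1 s2 sg_anti[OF ne]
      by (simp add: psi_def del: fsign_remove_self) (simp add: algebra_simps)
  qed
qed

lemma AC3: assumes g: "good v"
  shows "psid j (psid l v) T = - psid l (psid j v) T"
proof (cases "j \<noteq> l \<and> j \<notin> T \<and> l \<notin> T")
  case False then show ?thesis by (auto simp: psid_def)
next
  case c: True
  have e: "insert l (insert j T) = insert j (insert l T)" by auto
  show ?thesis
  proof (cases "v (insert l (insert j T)) = 0")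
    case True then show ?thesis using e c by (simp add: psid_def)
  next
    case False
    then have "maya (insert l (insert j T))" using g unfolding good_def by blast
    then have m: "maya T" by simp
    have s1: "fsign (insert j T) l = sg l j * fsign T l" using m c by (simp add: fsign_insert)
    have s2: "fsign (insert l T) j = sg j l * fsign T j" using m c by (simp add: fsign_insert)
    have ne: "j \<noteq> l" using c by simp
    show ?thesis using c e s1 s2 sg_anti[OF ne]
      by (simp add: psid_def)
  qed
qed




lemma psi_diff: "psi i (\<lambda>T. f T - c * g T) = (\<lambda>T. psi i f T - c * psi i g T)"
  by (auto simp: psi_def algebra_simps)
lemma psid_diff: "psid i (\<lambda>T. f T - c * g T) = (\<lambda>T. psid i f T - c * psid i g T)"
  by (auto simp: psid_def algebra_simps)
lemma psi_neg: "psi i (\<lambda>T. - f T) = (\<lambda>T. - psi i f T)"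
  by (auto simp: psi_def)
lemma psi_zero: "psi i (\<lambda>T. 0) = (\<lambda>T. 0)"
  by (auto simp: psi_def)
lemma psid_zero: "psid i (\<lambda>T. 0) = (\<lambda>T. 0)"
  by (auto simp: psid_def)
lemma psi_sum: "psi i (\<lambda>T. \<Sum>k\<in>K. a k * f k T) = (\<lambda>T. \<Sum>k\<in>K. a k * psi i (f k) T)"
  by (auto simp: psi_def sum_distrib_left algebra_simps)
lemma psid_sum: "psid i (\<lambda>T. \<Sum>k\<in>K. a k * f k T) = (\<lambda>T. \<Sum>k\<in>K. a k * psid i (f k) T)"
  by (auto simp: psid_def sum_distrib_left algebra_simps)

lemma AC1': "good v \<Longrightarrow> psid j (psi k v) = (\<lambda>T. (if k = j then v T else 0) - psi k (psid j v) T)"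
  using AC1[of v k j] by (auto simp: fun_eq_iff algebra_simps)
lemma AC2': "good v \<Longrightarrow> psi i (psi k v) = (\<lambda>T. - psi k (psi i v) T)"
  using AC2[of v i k] by (auto simp: fun_eq_iff)
lemma AC3': "good v \<Longrightarrow> psid j (psid l v) = (\<lambda>T. - psid l (psid j v) T)"
  using AC3[of v j l] by (auto simp: fun_eq_iff)

lemma psi_ifz: "psi i (\<lambda>T. (if b then w T else 0) - g T) = (\<lambda>T. (if b then psi i w T else 0) - psi i g T)"
  by (cases b) (auto simp: psi_def fun_eq_iff algebra_simps)

definition A :: "int \<Rightarrow> int \<Rightarrow> fvec \<Rightarrow> fvec" where "A i j v = psi i (psid j v)"

lemma commA: assumes g: "good v"
  shows "A i j (A k l v) T - A k l (A i j v) T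
     = (if j = k then A i l v T else 0) - (if i = l then A k j v T else 0)"
proof -
  have g1: "good (psid l v)" "good (psid j v)" "good (psid j (psid l v))" using g by (simp_all add: good_psid)
  have e1: "A i j (A k l v) T = (if k = j then psi i (psid l v) T else 0) + psi k (psi i (psid j (psid l v))) T"
    unfolding A_def AC1'[OF g1(1)] psi_ifz AC2'[OF g1(3), of i k] by simp
  have e2: "A k l (A i j v) T = (if i = l then psi k (psid j v) T else 0) - psi k (psi i (psid l (psid j v))) T"
    unfolding A_def AC1'[OF g1(2)] psi_ifz by simp
  have e3: "psi k (psi i (psid l (psid j v))) T = - psi k (psi i (psid j (psid l v))) T"
    unfolding AC3'[OF g, of l j] psi_neg by simp
  show ?thesis using e1 e2 e3 by (auto simp: A_def)
qed

lemma nord_A: "nord i j v = (\<lambda>T. A i j v T - vev (A i j) * v T)"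
  by (simp add: nord_def A_def[abs_def])

lemma A_diff: "A i j (\<lambda>T. f T - c * g T) = (\<lambda>T. A i j f T - c * A i j g T)"
  by (simp add: A_def psid_diff psi_diff)

lemma comm_nord: assumes g: "good v"
  shows "nord i j (nord k l v) T - nord k l (nord i j v) T
     = (if j = k then A i l v T else 0) - (if i = l then A k j v T else 0)"
proof -
  have "nord i j (nord k l v) T - nord k l (nord i j v) T = A i j (A k l v) T - A k l (A i j v) T"
    unfolding nord_A A_diff by (simp add: algebra_simps)
  then show ?thesis using commA[OF g] by simp
qed




lemma fock_iff: "v \<in> fock \<longleftrightarrow> fin v \<and> good v"
  by (auto simp: fock_def fin_def good_def)

lemma fin_psi: "fin v \<Longrightarrow> fin (psi i v)"
proof -
  assume f: "fin v"
  have "{T. psi i v T \<noteq> 0} \<subseteq> insert i ` {S. v S \<noteq> 0}"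
  proof
    fix T assume "T \<in> {T. psi i v T \<noteq> 0}"
    then have "i \<in> T" "v (T - {i}) \<noteq> 0" by (auto simp: psi_def split: if_splits)
    then show "T \<in> insert i ` {S. v S \<noteq> 0}" by (intro image_eqI[of _ _ "T - {i}"]) auto
  qed
  then show ?thesis using f unfolding fin_def by (meson finite_imageI finite_subset)
qed

lemma fin_psid: "fin v \<Longrightarrow> fin (psid i v)"
proof -
  assume f: "fin v"
  have "{T. psid i v T \<noteq> 0} \<subseteq> (\<lambda>S. S - {i}) ` {S. v S \<noteq> 0}"
  proof
    fix T assume "T \<in> {T. psid i v T \<noteq> 0}"
    then have "i \<notin> T" "v (insert i T) \<noteq> 0" by (auto simp: psid_def split: if_splits)
    then show "T \<in> (\<lambda>S. S - {i}) ` {S. v S \<noteq> 0}" by (intro image_eqI[of _ _ "insert i T"]) auto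
  qed
  then show ?thesis using f unfolding fin_def by (meson finite_imageI finite_subset)
qed

lemma fin_diff: "fin f \<Longrightarrow> fin g \<Longrightarrow> fin (\<lambda>T. f T - c * g T)"
proof -
  assume "fin f" "fin g"
  moreover have "{T. f T - c * g T \<noteq> 0} \<subseteq> {T. f T \<noteq> 0} \<union> {T. g T \<noteq> 0}" by auto
  ultimately show ?thesis unfolding fin_def by (meson finite_UnI finite_subset)
qed

lemma good_diff: "good f \<Longrightarrow> good g \<Longrightarrow> good (\<lambda>T. f T - c * g T)"
  unfolding good_def by (metis mult_zero_right diff_zero)

lemma fin_sum: "finite K \<Longrightarrow> (\<And>k. k \<in> K \<Longrightarrow> fin (f k)) \<Longrightarrow> fin (\<lambda>T. \<Sum>k\<in>K. a k * f k T)"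
proof -
  assume K: "finite K" and h: "\<And>k. k \<in> K \<Longrightarrow> fin (f k)"
  have "{T. (\<Sum>k\<in>K. a k * f k T) \<noteq> 0} \<subseteq> (\<Union>k\<in>K. {T. f k T \<noteq> 0})"
  proof
    fix T assume "T \<in> {T. (\<Sum>k\<in>K. a k * f k T) \<noteq> 0}"
    then obtain k where "k \<in> K" "a k * f k T \<noteq> 0" by (meson mem_Collect_eq sum.neutral)
    then show "T \<in> (\<Union>k\<in>K. {T. f k T \<noteq> 0})" by auto
  qed
  moreover have "finite (\<Union>k\<in>K. {T. f k T \<noteq> 0})" using K h unfolding fin_def by blast
  ultimately show ?thesis unfolding fin_def by (rule finite_subset)
qed

lemma good_sum: "(\<And>k. k \<in> K \<Longrightarrow> good (f k)) \<Longrightarrow> good (\<lambda>T. \<Sum>k\<in>K. a k * f k T)"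
  unfolding good_def by (metis (no_types, lifting) mult_zero_right sum.neutral)

lemma fin_nord: "fin v \<Longrightarrow> fin (nord i j v)"
  unfolding nord_A A_def by (intro fin_diff fin_psi fin_psid)
lemma good_nord: "good v \<Longrightarrow> good (nord i j v)"
  unfolding nord_A A_def by (intro good_diff good_psi good_psid)

lemma A_diag: "A i i v T = (if i \<in> T then v T else 0)"
proof (cases "i \<in> T")
  case True
  then have "insert i (T - {i}) = T" by auto
  then show ?thesis using True by (simp add: A_def psi_def psid_def fsign_sq mult.assoc[symmetric])
qed (simp add: A_def psi_def)

lemma vev_diag: "vev (A i i) = (if i < 0 then 1 else 0)"
  by (simp add: vev_def A_diag vac_def)

lemma vev_off: "i \<noteq> j \<Longrightarrow> vev (A i j) = 0"
proof -
  assume ne: "i \<noteq> j"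
  have "i < 0 \<Longrightarrow> insert j ({..<0} - {i}) \<noteq> {..<0::int}" using ne by auto
  then show ?thesis by (auto simp: vev_def A_def psi_def psid_def vac_def)
qed

definition G :: "int \<Rightarrow> int set \<Rightarrow> int set" where
  "G d S = ({..<0} - S) \<union> {i. i + d \<in> S - {..<0}} \<union> {i. 0 \<le> i \<and> i < -d}"

lemma finite_G: "maya S \<Longrightarrow> finite (G d S)"
proof -
  assume m: "maya S"
  have "{i. i + d \<in> S - {..<0}} = (\<lambda>x. x - d) ` (S - {..<0})" by force
  moreover have "{i::int. 0 \<le> i \<and> i < -d} = {0..<-d}" by auto
  ultimately show ?thesis using m by (simp add: G_def maya_def)
qed

lemma nord_nz: assumes "nord i (i + d) v T \<noteq> 0" shows "\<exists>S. v S \<noteq> 0 \<and> i \<in> G d S"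
proof (cases "d = 0")
  case True
  then have "nord i (i + d) v T = ((if i \<in> T then 1 else 0) - (if i < 0 then 1 else 0)) * v T"
    by (simp add: nord_A A_diag vev_diag algebra_simps)
  then show ?thesis using assms by (intro exI[of _ T]) (auto simp: G_def True split: if_splits)
next
  case False
  then have "nord i (i + d) v T = A i (i + d) v T" by (simp add: nord_A vev_off)
  then have "i \<in> T \<and> i + d \<notin> T - {i} \<and> v (insert (i + d) (T - {i})) \<noteq> 0"
    using assms by (auto simp: A_def psi_def psid_def split: if_splits)
  then show ?thesis using False
    by (intro exI[of _ "insert (i + d) (T - {i})"]) (auto simp: G_def)
qed

lemma fin_Sset: assumes "fin v" "good v" shows "finite {i. nord i (i + d) v \<noteq> (\<lambda>_. 0)}"
proof -
  have "{i. nord i (i + d) v \<noteq> (\<lambda>_. 0)} \<subseteq> (\<Union>S\<in>{S. v S \<noteq> 0}. G d S)"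
  proof
    fix i assume "i \<in> {i. nord i (i + d) v \<noteq> (\<lambda>_. 0)}"
    then obtain T where "nord i (i + d) v T \<noteq> 0" by auto
    then show "i \<in> (\<Union>S\<in>{S. v S \<noteq> 0}. G d S)" using nord_nz by blast
  qed
  moreover have "finite (\<Union>S\<in>{S. v S \<noteq> 0}. G d S)"
    using assms finite_G unfolding fin_def good_def by blast
  ultimately show ?thesis by (rule finite_subset)
qed

lemma fin_Aset: assumes "fin v" "good v" "d \<noteq> 0" shows "finite {i. A i (i + d) v \<noteq> (\<lambda>_. 0)}"
proof -
  have "A i (i + d) v = nord i (i + d) v" for i using assms(3) by (simp add: nord_A vev_off)
  then show ?thesis using fin_Sset[OF assms(1,2)] by simp
qed




lemma Jop_eq: assumes "finite I" "{i. nord i (i + n * int m) v \<noteq> (\<lambda>_. 0)} \<subseteq> I"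
  shows "Jop m n F v = (\<lambda>T. \<Sum>i\<in>I. (\<Prod>k<m. F (i + n * int k)) * nord i (i + n * int m) v T)"
proof (rule ext)
  fix T
  show "Jop m n F v T = (\<Sum>i\<in>I. (\<Prod>k<m. F (i + n * int k)) * nord i (i + n * int m) v T)"
    unfolding Jop_def
    by (rule sum.mono_neutral_left[OF assms(1) assms(2)]) auto
qed

lemma Jop_fg: assumes "fin v" "good v" shows "fin (Jop m n F v) \<and> good (Jop m n F v)"
proof -
  let ?I = "{i. nord i (i + n * int m) v \<noteq> (\<lambda>_. 0)}"
  have fi: "finite ?I" using fin_Sset[OF assms] .
  have e: "Jop m n F v = (\<lambda>T. \<Sum>i\<in>?I. (\<Prod>k<m. F (i + n * int k)) * nord i (i + n * int m) v T)"
    by (rule Jop_eq[OF fi]) simp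
  show ?thesis unfolding e
    using fi assms by (auto intro!: fin_sum good_sum fin_nord good_nord)
qed

lemma nord_sum: "nord i j (\<lambda>T. \<Sum>k\<in>K. c k * f k T) = (\<lambda>T. \<Sum>k\<in>K. c k * nord i j (f k) T)"
  unfolding nord_A A_def psid_sum psi_sum
  by (simp add: sum_distrib_left sum_subtractf algebra_simps)

lemma prod_split: "(\<Prod>k<p+(q::nat). g k) = (\<Prod>k<p. g k) * (\<Prod>k<q. g (p + k))"
  by (induction q) (simp_all add: mult.assoc)

lemma coef: "(\<Prod>k<m. F (x + n * int k)) * (\<Prod>k<m'. F ((x + n * int m) + n * int k))
  = (\<Prod>k<m'. F (x + n * int k)) * (\<Prod>k<m. F ((x + n * int m') + n * int k))"
proof -
  have 1: "(\<Prod>k<m+m'. F (x + n * int k)) = (\<Prod>k<m. F (x + n * int k)) * (\<Prod>k<m'. F ((x + n * int m) + n * int k))"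
    by (subst prod_split) (simp add: algebra_simps)
  have 2: "(\<Prod>k<m'+m. F (x + n * int k)) = (\<Prod>k<m'. F (x + n * int k)) * (\<Prod>k<m. F ((x + n * int m') + n * int k))"
    by (subst prod_split) (simp add: algebra_simps)
  show ?thesis using 1 2 by (simp add: add.commute)
qed


lemma sum_restrict_shift:
  assumes "\<And>x. x \<in> U \<Longrightarrow> x + d \<notin> U \<Longrightarrow> h x = 0"
  shows "(\<Sum>x\<in>U. if x + d \<in> U then h x else 0) = (\<Sum>x\<in>U. h x)"
  by (rule sum.cong) (use assms in auto)

theorem mainTheorem3:
  fixes F :: "int \<Rightarrow> complex" and n :: int and m m' :: nat
  assumes "m \<ge> 1" and "m' \<ge> 1" and "v \<in> fock"
  shows "Jop m n F (Jop m' n F v) = Jop m' n F (Jop m n F v)"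
proof -
  from assms(3) have f: "fin v" and g: "good v" by (simp_all add: fock_iff)
  define a where "a i = (\<Prod>k<m. F (i + n * int k))" for i
  define b where "b i = (\<Prod>k<m'. F (i + n * int k))" for i
  define d1 where "d1 = n * int m"
  define d2 where "d2 = n * int m'"
  define w1 where "w1 = Jop m' n F v"
  define w2 where "w2 = Jop m n F v"
  have fw1: "fin w1" "good w1" using Jop_fg[OF f g] unfolding w1_def by auto
  have fw2: "fin w2" "good w2" using Jop_fg[OF f g] unfolding w2_def by auto
  define W where "W = (if n = 0 then {} else {i. A i (i + (d1 + d2)) v \<noteq> (\<lambda>_. 0)})"
  have finW: "finite W"
  proof (cases "n = 0")
    case False
    then have "d1 + d2 \<noteq> 0" using assms(1,2) unfolding d1_def d2_def
      by (simp add: distrib_left[symmetric])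
    then show ?thesis using fin_Aset[OF f g] False unfolding W_def by simp
  qed (simp add: W_def)
  define U where "U = {i. nord i (i + d2) v \<noteq> (\<lambda>_. 0)} \<union> {i. nord i (i + d1) v \<noteq> (\<lambda>_. 0)}
     \<union> {i. nord i (i + d1) w1 \<noteq> (\<lambda>_. 0)} \<union> {i. nord i (i + d2) w2 \<noteq> (\<lambda>_. 0)}
     \<union> W \<union> (\<lambda>x. x + d1) ` W \<union> (\<lambda>x. x + d2) ` W"
  have finU: "finite U" unfolding U_def
    using fin_Sset[OF f g] fin_Sset[OF fw1] fin_Sset[OF fw2] finW by simp
  have ew1: "w1 = (\<lambda>T. \<Sum>k\<in>U. b k * nord k (k + d2) v T)"
    unfolding w1_def b_def d2_def by (rule Jop_eq[OF finU]) (auto simp: U_def d2_def)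
  have ew2: "w2 = (\<lambda>T. \<Sum>k\<in>U. a k * nord k (k + d1) v T)"
    unfolding w2_def a_def d1_def by (rule Jop_eq[OF finU]) (auto simp: U_def d1_def)
  have L: "Jop m n F w1 = (\<lambda>T. \<Sum>i\<in>U. a i * nord i (i + d1) w1 T)"
    unfolding a_def d1_def by (rule Jop_eq[OF finU]) (auto simp: U_def d1_def)
  have R: "Jop m' n F w2 = (\<lambda>T. \<Sum>i\<in>U. b i * nord i (i + d2) w2 T)"
    unfolding b_def d2_def by (rule Jop_eq[OF finU]) (auto simp: U_def d2_def)
  have cf: "a x * b (x + d1) = b x * a (x + d2)" for x
    unfolding a_def b_def d1_def d2_def by (rule coef)
  show ?thesis unfolding w1_def[symmetric] w2_def[symmetric] L R
  proof (rule ext)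
    fix T
    define h where "h x = a x * b (x + d1) * A x (x + d1 + d2) v T" for x
    have hz: "h x = 0" if "x \<in> U" "x + d \<notin> U" "d = d1 \<or> d = d2" for x d
    proof -
      have "n \<noteq> 0" using that by (auto simp: d1_def d2_def)
      then have "x \<notin> W" using that unfolding U_def by auto
      then have "A x (x + (d1 + d2)) v = (\<lambda>_. 0)" using \<open>n \<noteq> 0\<close> unfolding W_def by auto
      then show ?thesis by (simp add: h_def add.assoc)
    qed
    have p1: "(\<Sum>i\<in>U. \<Sum>k\<in>U. if k = i + d1 then a i * b k * A i (k + d2) v T else 0)
       = (\<Sum>x\<in>U. h x)"
    proof -
      have "(\<Sum>i\<in>U. \<Sum>k\<in>U. if k = i + d1 then a i * b k * A i (k + d2) v T else 0)
        = (\<Sum>i\<in>U. if i + d1 \<in> U then h i else 0)"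
        by (rule sum.cong) (simp_all add: sum.delta[OF finU] h_def)
      also have "\<dots> = (\<Sum>x\<in>U. h x)" by (rule sum_restrict_shift) (use hz in blast)
      finally show ?thesis .
    qed
    have p2: "(\<Sum>i\<in>U. \<Sum>k\<in>U. if i = k + d2 then a i * b k * A k (i + d1) v T else 0)
       = (\<Sum>x\<in>U. h x)"
    proof -
      have "(\<Sum>i\<in>U. \<Sum>k\<in>U. if i = k + d2 then a i * b k * A k (i + d1) v T else 0)
        = (\<Sum>k\<in>U. \<Sum>i\<in>U. if i = k + d2 then a i * b k * A k (i + d1) v T else 0)"
        by (rule sum.swap)
      also have "\<dots> = (\<Sum>k\<in>U. if k + d2 \<in> U then h k else 0)"
      proof (rule sum.cong)
        fix k assume "k \<in> U"
        have "a (k + d2) * b k = a k * b (k + d1)" using cf[of k] by (simp add: mult.commute)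
        moreover have "A k (k + d2 + d1) v T = A k (k + d1 + d2) v T" by (simp add: ac_simps)
        ultimately show "(\<Sum>i\<in>U. if i = k + d2 then a i * b k * A k (i + d1) v T else 0)
            = (if k + d2 \<in> U then h k else 0)"
          by (simp add: sum.delta[OF finU] h_def)
      qed simp
      also have "\<dots> = (\<Sum>x\<in>U. h x)" by (rule sum_restrict_shift) (use hz in blast)
      finally show ?thesis .
    qed
    have key: "(\<Sum>i\<in>U. \<Sum>k\<in>U. a i * b k * (nord i (i + d1) (nord k (k + d2) v) T
                 - nord k (k + d2) (nord i (i + d1) v) T)) = 0"
    proof -
      have "(\<Sum>i\<in>U. \<Sum>k\<in>U. a i * b k * (nord i (i + d1) (nord k (k + d2) v) T
                 - nord k (k + d2) (nord i (i + d1) v) T))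
        = (\<Sum>i\<in>U. \<Sum>k\<in>U. (if k = i + d1 then a i * b k * A i (k + d2) v T else 0)
              - (if i = k + d2 then a i * b k * A k (i + d1) v T else 0))"
        by (intro sum.cong refl) (auto simp: comm_nord[OF g] algebra_simps)
      also have "\<dots> = 0" using p1 p2 by (simp add: sum_subtractf)
      finally show ?thesis .
    qed
    have lhs: "(\<Sum>i\<in>U. a i * nord i (i + d1) w1 T)
        = (\<Sum>i\<in>U. \<Sum>k\<in>U. a i * b k * nord i (i + d1) (nord k (k + d2) v) T)"
      unfolding ew1 nord_sum by (simp add: sum_distrib_left mult.assoc)
    have rhs: "(\<Sum>i\<in>U. b i * nord i (i + d2) w2 T)
        = (\<Sum>i\<in>U. \<Sum>k\<in>U. a i * b k * nord k (k + d2) (nord i (i + d1) v) T)"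
      unfolding ew2 nord_sum
      by (subst sum.swap) (simp add: sum_distrib_left mult.assoc mult.left_commute)
    show "(\<Sum>i\<in>U. a i * nord i (i + d1) w1 T) = (\<Sum>i\<in>U. b i * nord i (i + d2) w2 T)"
      using key unfolding lhs rhs by (simp add: right_diff_distrib sum_subtractf)
  qed
qed


end
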